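(* Let $R$ be a unital ring, let $S\subseteq R$ be a subring with $1\in S$, and let $m,n\in\mathbb{N}$. (1) If $1\in\Sigma^m\big(S\cdot\big[[S,S]_1,[S,S]_1\big]_1\big)$, then $R=\Sigma^m\big([R,R]_1+[R,R]_1\cdot[R,R]_1\big)$. In particular, if there exist $a\in S$ and $u,v\in[S,S]_1$ with $1=a[u,v]$, then $R=[R,R]_1+[R,R]_1\cdot[R,R]_1$. (2) If $1\in\Sigma^n\big(S\cdot\big[[S,S]_1,[S,S]_1^{\cdot 2}\big]_1\big)$, then $\xi(R)\leq 3n$. In particular, if there exist $a\in S$ and $u,v,w\in[S,S]_1$ with $1=a[u,vw]$, then $\xi(R)\leq 3$.
   Context: $[x,y]=xy-yx$. For subsets $X,Y$ of a ring: $[X,Y]_1=\{[x,y]:x\in X,y\in Y\}$; $X\cdot Y=\{xy:x\in X,y\in Y\}$, $X^{\cdot 2}=X\cdot X$; $X+Y=\{x+y\}$; $\Sigma^k X=\{x_1+\dots+x_k:x_i\in X\}$. For a unital ring $T$ generated by its commutators, $\xi(T)$ is the minimal $N$ such that $T=\Sigma^N\big([T,T]_1\cdot[T,T]_1\big)$, i.e. every element is a sum of $N$ elements $[b,c][d,e]$. *)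

theory Defs
  imports Main
begin

definition commutator :: "'a::ring_1 \<Rightarrow> 'a \<Rightarrow> 'a" where
  "commutator x y = x * y - y * x"

definition comm_set :: "'a::ring_1 set \<Rightarrow> 'a set \<Rightarrow> 'a set" where
  "comm_set X Y = {commutator x y | x y. x \<in> X \<and> y \<in> Y}"

definition set_mul :: "'a::ring_1 set \<Rightarrow> 'a set \<Rightarrow> 'a set" where
  "set_mul X Y = {x * y | x y. x \<in> X \<and> y \<in> Y}"

definition set_add :: "'a::ring_1 set \<Rightarrow> 'a set \<Rightarrow> 'a set" where
  "set_add X Y = {x + y | x y. x \<in> X \<and> y \<in> Y}"

definition sigma_k :: "nat \<Rightarrow> 'a::ring_1 set \<Rightarrow> 'a set" where
  "sigma_k k X = {sum_list xs | xs. length xs = k \<and> set xs \<subseteq> X}"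

definition unital_subring :: "'a::ring_1 set \<Rightarrow> bool" where
  "unital_subring S \<longleftrightarrow> 1 \<in> S \<and> 0 \<in> S \<and>
     (\<forall>x\<in>S. \<forall>y\<in>S. x + y \<in> S \<and> x * y \<in> S) \<and> (\<forall>x\<in>S. - x \<in> S)"

definition xi :: "'a::ring_1 set \<Rightarrow> nat" where
  "xi T = (LEAST N. T = sigma_k N (set_mul (comm_set T T) (comm_set T T)))"

end

theory Submission
  imports Defs
begin

lemma sum_list_mult_left: "(x::'a::ring_1) * sum_list xs = sum_list (map ((*) x) xs)"
  by (induction xs) (auto simp: distrib_left)

lemma sigma_1: "sigma_k 1 X = X"
proof -
  have "xs = [hd xs]" if "length xs = 1" for xs :: "'a list"
    using that by (cases xs) auto
  then show ?thesis unfolding sigma_k_def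
    by (auto, metis (no_types) sum_list.Cons sum_list.Nil add.right_neutral list.set_intros(1) subset_iff)
       (metis One_nat_def add.right_neutral empty_subsetI insert_subset length_Cons list.set(1) list.set(2) list.size(3) sum_list.Cons sum_list.Nil)
qed

lemma lemA:
  assumes "(1::'a::ring_1) \<in> sigma_k m X" "\<And>t x. t \<in> X \<Longrightarrow> x * t \<in> Y"
  shows "(UNIV::'a set) = sigma_k m Y"
proof -
  obtain xs where xs: "length xs = m" "set xs \<subseteq> X" "1 = sum_list xs"
    using assms(1) unfolding sigma_k_def by auto
  have "x \<in> sigma_k m Y" for x
  proof -
    have "x = sum_list (map ((*) x) xs)" using xs(3) sum_list_mult_left[of x xs] by simp
    moreover have "set (map ((*) x) xs) \<subseteq> Y" using xs(2) assms(2) by auto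
    ultimately show ?thesis unfolding sigma_k_def using xs(1) by (intro CollectI exI[of _ "map ((*) x) xs"]) auto
  qed
  then show ?thesis by auto
qed

lemma sigma_nest:
  assumes "\<And>y. y \<in> X \<Longrightarrow> y \<in> sigma_k k Y"
  shows "set xs \<subseteq> X \<Longrightarrow> sum_list xs \<in> sigma_k (k * length xs) Y"
proof (induction xs)
  case Nil
  then show ?case unfolding sigma_k_def by auto
next
  case (Cons a xs)
  then have "sum_list xs \<in> sigma_k (k * length xs) Y" by auto
  then obtain lb where lb: "length lb = k * length xs" "set lb \<subseteq> Y" "sum_list xs = sum_list lb"
    unfolding sigma_k_def by auto
  have "a \<in> sigma_k k Y" using Cons assms by auto
  then obtain la where la: "length la = k" "set la \<subseteq> Y" "a = sum_list la"
    unfolding sigma_k_def by auto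
  show ?case unfolding sigma_k_def
    by (intro CollectI exI[of _ "la @ lb"]) (use la lb in auto)
qed

lemma sigma_nest2:
  assumes "\<And>y. y \<in> X \<Longrightarrow> y \<in> sigma_k k Y"
  shows "sigma_k n X \<subseteq> sigma_k (k * n) Y"
  using sigma_nest[OF assms] unfolding sigma_k_def[of n] by auto

lemma comm_sub: "comm_set S S \<subseteq> comm_set UNIV UNIV"
  unfolding comm_set_def by auto

lemma id1: "(b::'a::ring_1) * commutator u v = commutator (b*u) v + commutator v b * u"
  unfolding commutator_def by (simp add: algebra_simps)

lemma id2: "(b::'a::ring_1) * commutator u (v*w) =
   commutator (b*u) v * w + v * commutator (b*u) w + commutator (v*w) b * u"
  unfolding commutator_def by (simp add: algebra_simps)

lemma in_comm: "commutator x y \<in> comm_set UNIV UNIV"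
  unfolding comm_set_def by auto

lemma part1:
  assumes "(1::'a::ring_1) \<in> sigma_k m (set_mul S (comm_set (comm_set S S) (comm_set S S)))"
  shows "(UNIV :: 'a set) = sigma_k m (set_add (comm_set UNIV UNIV)
              (set_mul (comm_set UNIV UNIV) (comm_set UNIV UNIV)))"
proof (rule lemA[OF assms])
  fix t x assume "t \<in> set_mul S (comm_set (comm_set S S) (comm_set S S))"
  then obtain a u v where t: "t = a * commutator u v" "u \<in> comm_set S S" "v \<in> comm_set S S"
    unfolding set_mul_def comm_set_def[of "comm_set S S"] by auto
  have "x * t = commutator (x*a*u) v + commutator v (x*a) * u"
    using t id1[of "x*a" u v] by (simp add: mult.assoc)
  moreover have "u \<in> comm_set UNIV UNIV" using t comm_sub by auto
  ultimately show "x * t \<in> set_add (comm_set UNIV UNIV) (set_mul (comm_set UNIV UNIV) (comm_set UNIV UNIV))"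
    unfolding set_add_def set_mul_def using in_comm by blast
qed

lemma sigma3:
  assumes "a \<in> Z" "b \<in> Z" "c \<in> Z"
  shows "(a::'a::ring_1) + b + c \<in> sigma_k 3 Z"
  unfolding sigma_k_def using assms
  by (intro CollectI exI[of _ "[a,b,c]"]) (auto simp: numeral_3_eq_3 add.assoc)

lemma part2:
  assumes "(1::'a::ring_1) \<in> sigma_k n (set_mul S (comm_set (comm_set S S)
                 (set_mul (comm_set S S) (comm_set S S))))"
  shows "xi (UNIV :: 'a set) \<le> 3 * n"
proof -
  let ?Z = "set_mul (comm_set (UNIV::'a set) UNIV) (comm_set UNIV UNIV)"
  have U: "(UNIV :: 'a set) = sigma_k n (sigma_k 3 ?Z)"
  proof (rule lemA[OF assms])
    fix t x assume "t \<in> set_mul S (comm_set (comm_set S S) (set_mul (comm_set S S) (comm_set S S)))"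
    then obtain a u v w where t: "t = a * commutator u (v*w)" "u \<in> comm_set S S" "v \<in> comm_set S S"
      "w \<in> comm_set S S"
      unfolding set_mul_def comm_set_def[of "comm_set S S"] by auto
    have e: "x * t = commutator (x*a*u) v * w + v * commutator (x*a*u) w + commutator (v*w) (x*a) * u"
      using t id2[of "x*a" u v w] by (simp add: mult.assoc)
    have "u \<in> comm_set UNIV UNIV" "v \<in> comm_set UNIV UNIV" "w \<in> comm_set UNIV UNIV"
      using t comm_sub by auto
    then show "x * t \<in> sigma_k 3 ?Z" unfolding e
      unfolding set_mul_def using in_comm by (intro sigma3) blast+
  qed
  have "(UNIV :: 'a set) = sigma_k (3*n) ?Z"
    using sigma_nest2[of "sigma_k 3 ?Z" 3 ?Z n] U by auto
  then show ?thesis unfolding xi_def by (intro Least_le) simp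
qed

theorem lemma5p13:
  fixes S :: "'a::ring_1 set" and m n :: nat
  assumes "unital_subring S"
  shows
   "(1 \<in> sigma_k m (set_mul S (comm_set (comm_set S S) (comm_set S S)))
       \<longrightarrow> (UNIV :: 'a set) = sigma_k m (set_add (comm_set UNIV UNIV)
              (set_mul (comm_set UNIV UNIV) (comm_set UNIV UNIV))))
    \<and> ((\<exists>a\<in>S. \<exists>u\<in>comm_set S S. \<exists>v\<in>comm_set S S. 1 = a * commutator u v)
       \<longrightarrow> (UNIV :: 'a set) = set_add (comm_set UNIV UNIV)
              (set_mul (comm_set UNIV UNIV) (comm_set UNIV UNIV)))
    \<and> (1 \<in> sigma_k n (set_mul S (comm_set (comm_set S S)
                 (set_mul (comm_set S S) (comm_set S S))))
       \<longrightarrow> xi (UNIV :: 'a set) \<le> 3 * n)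
    \<and> ((\<exists>a\<in>S. \<exists>u\<in>comm_set S S. \<exists>v\<in>comm_set S S. \<exists>w\<in>comm_set S S.
           1 = a * commutator u (v * w))
       \<longrightarrow> xi (UNIV :: 'a set) \<le> 3)"
proof (intro conjI impI)
  assume "1 \<in> sigma_k m (set_mul S (comm_set (comm_set S S) (comm_set S S)))"
  then show "(UNIV :: 'a set) = sigma_k m (set_add (comm_set UNIV UNIV)
              (set_mul (comm_set UNIV UNIV) (comm_set UNIV UNIV)))" by (rule part1)
next
  assume "\<exists>a\<in>S. \<exists>u\<in>comm_set S S. \<exists>v\<in>comm_set S S. 1 = a * commutator u v"
  then have "1 \<in> sigma_k 1 (set_mul S (comm_set (comm_set S S) (comm_set S S)))"
    unfolding sigma_1 set_mul_def comm_set_def[of "comm_set S S"] by blast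
  from part1[OF this] show "(UNIV :: 'a set) = set_add (comm_set UNIV UNIV)
              (set_mul (comm_set UNIV UNIV) (comm_set UNIV UNIV))" by (metis sigma_1)
next
  assume "1 \<in> sigma_k n (set_mul S (comm_set (comm_set S S)
                 (set_mul (comm_set S S) (comm_set S S))))"
  then show "xi (UNIV :: 'a set) \<le> 3 * n" by (rule part2)
next
  assume "\<exists>a\<in>S. \<exists>u\<in>comm_set S S. \<exists>v\<in>comm_set S S. \<exists>w\<in>comm_set S S.
           1 = a * commutator u (v * w)"
  then have "1 \<in> sigma_k 1 (set_mul S (comm_set (comm_set S S)
                 (set_mul (comm_set S S) (comm_set S S))))"
    unfolding sigma_1 set_mul_def[of S] comm_set_def[of "comm_set S S"] set_mul_def[of "comm_set S S"] by blast
  from part2[OF this] show "xi (UNIV :: 'a set) \<le> 3" by simp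
qed

end
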